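(* Let $K$ and $L$ be finite simplicial complexes. If $K$ and $L$ have the same simple homotopy type, then $\det(K)=\det(L)$, where $\det(K):=|\det(\mathcal{X}(K)_M)|$.
   Context: $\mathcal{X}(K)$ is the face poset of $K$ (simplices ordered by inclusion). For a finite poset $X=\{x_1,\dots,x_n\}$ (with a labelling), $X_M=(x_{i,j})$ is the $n\times n$ matrix with $x_{i,j}=0$ if $x_i\le x_j$ and $x_{i,j}=1$ otherwise. Simple homotopy type of simplicial complexes is in the classical sense of Whitehead (finite sequences of elementary collapses and expansions). *)

theory Defs
  imports Main "Jordan_Normal_Form.Determinant"
begin

definition simplicial_complex :: "'a set set \<Rightarrow> bool" where
  "simplicial_complex K \<longleftrightarrow> finite K \<and>
     (\<forall>s\<in>K. finite s \<and> s \<noteq> {}) \<and>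
     (\<forall>s\<in>K. \<forall>t. t \<subseteq> s \<and> t \<noteq> {} \<longrightarrow> t \<in> K)"

definition elementary_collapse :: "'a set set \<Rightarrow> 'a set set \<Rightarrow> bool" where
  "elementary_collapse K L \<longleftrightarrow> simplicial_complex K \<and>
     (\<exists>\<sigma> \<tau>. \<sigma> \<in> K \<and> \<tau> \<in> K \<and> \<tau> \<subset> \<sigma> \<and> card \<sigma> = card \<tau> + 1 \<and>
        (\<forall>\<rho>\<in>K. \<tau> \<subset> \<rho> \<longrightarrow> \<rho> = \<sigma>) \<and> L = K - {\<sigma>, \<tau>})"

definition simplicial_iso :: "'a set set \<Rightarrow> 'a set set \<Rightarrow> bool" where
  "simplicial_iso K L \<longleftrightarrow> (\<exists>f. inj_on f (\<Union>K) \<and> L = (\<lambda>s. f ` s) ` K)"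

definition sh_step :: "'a set set \<Rightarrow> 'a set set \<Rightarrow> bool" where
  "sh_step K L \<longleftrightarrow> elementary_collapse K L \<or> elementary_collapse L K \<or> simplicial_iso K L"

definition same_simple_homotopy_type :: "'a set set \<Rightarrow> 'a set set \<Rightarrow> bool" where
  "same_simple_homotopy_type K L \<longleftrightarrow> sh_step\<^sup>*\<^sup>* K L"

definition poset_matrix :: "('b \<Rightarrow> 'b \<Rightarrow> bool) \<Rightarrow> nat \<Rightarrow> (nat \<Rightarrow> 'b) \<Rightarrow> int mat" where
  "poset_matrix ord n x = mat n n (\<lambda>(i,j). if ord (x i) (x j) then 0 else 1)"

definition complex_det :: "'a set set \<Rightarrow> int" where
  "complex_det K = \<bar>det (poset_matrix (\<subseteq>) (card K)
       (SOME x. bij_betw x {..<card K} K))\<bar>"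

end

theory Submission
  imports Defs
begin

definition chi :: "'a set set \<Rightarrow> int" where
  "chi K = (\<Sum>b\<in>K. (-1::int) ^ card b)"

lemma alt_sum:
  assumes fB: "finite B" and AB: "A \<subseteq> B"
  shows "(\<Sum>s\<in>{s. A \<subseteq> s \<and> s \<subseteq> B}. (-1::int) ^ card s) = (if A = B then (-1) ^ card A else 0)"
proof (cases "A = B")
  case True
  then have "{s. A \<subseteq> s \<and> s \<subseteq> B} = {A}" by auto
  then show ?thesis using True by simp
next
  case False
  then obtain v where v: "v \<in> B" "v \<notin> A" using AB by auto
  define S0 where "S0 = {s. A \<subseteq> s \<and> s \<subseteq> B \<and> v \<notin> s}"
  have fS0: "finite S0" unfolding S0_def
    by (rule finite_subset[of _ "Pow B"]) (use fB in auto)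
  have sub1: "{s. A \<subseteq> s \<and> s \<subseteq> B} \<subseteq> S0 \<union> insert v ` S0"
  proof
    fix s assume s: "s \<in> {s. A \<subseteq> s \<and> s \<subseteq> B}"
    show "s \<in> S0 \<union> insert v ` S0"
    proof (cases "v \<in> s")
      case True
      then have "s = insert v (s - {v})" by auto
      moreover have "s - {v} \<in> S0" using s v unfolding S0_def by auto
      ultimately show ?thesis by blast
    next
      case False then show ?thesis using s unfolding S0_def by auto
    qed
  qed
  have sub2: "S0 \<union> insert v ` S0 \<subseteq> {s. A \<subseteq> s \<and> s \<subseteq> B}"
    using v unfolding S0_def by auto
  have split: "{s. A \<subseteq> s \<and> s \<subseteq> B} = S0 \<union> insert v ` S0"
    using sub1 sub2 by (rule equalityI)
  have disj: "S0 \<inter> insert v ` S0 = {}" unfolding S0_def by auto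
  have inj: "inj_on (insert v) S0" unfolding S0_def inj_on_def
    by (metis (no_types, lifting) Diff_insert_absorb mem_Collect_eq)
  have "(\<Sum>s\<in>insert v ` S0. (-1::int) ^ card s) = (\<Sum>s\<in>S0. (-1::int) ^ card (insert v s))"
    by (rule sum.reindex[OF inj, unfolded comp_def])
  also have "\<dots> = (\<Sum>s\<in>S0. - ((-1::int) ^ card s))"
  proof (rule sum.cong[OF refl])
    fix s assume "s \<in> S0"
    then have "finite s" "v \<notin> s" unfolding S0_def using fB finite_subset by auto
    then show "(-1::int) ^ card (insert v s) = - ((-1) ^ card s)" by simp
  qed
  finally have "(\<Sum>s\<in>insert v ` S0. (-1::int) ^ card s) = - (\<Sum>s\<in>S0. (-1::int) ^ card s)"
    by (simp add: sum_negf)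
  then show ?thesis using False
    by (simp add: split sum.union_disjoint[OF fS0 finite_imageI[OF fS0] disj])
qed

lemma complex_interval:
  assumes K: "simplicial_complex K" and a: "a \<in> K" and c: "c \<in> K"
  shows "(\<Sum>s\<in>K. (if a \<subseteq> s \<and> s \<subseteq> c then (-1::int) ^ card s else 0)) = (if a = c then (-1) ^ card a else 0)"
proof -
  have "(\<Sum>s\<in>K. (if a \<subseteq> s \<and> s \<subseteq> c then (-1::int) ^ card s else 0))
      = (\<Sum>s\<in>{s\<in>K. a \<subseteq> s \<and> s \<subseteq> c}. (-1::int) ^ card s)"
    using K unfolding simplicial_complex_def by (simp add: sum.inter_filter)
  show ?thesis
  proof (cases "a \<subseteq> c")
    case True
    have "{s\<in>K. a \<subseteq> s \<and> s \<subseteq> c} = {s. a \<subseteq> s \<and> s \<subseteq> c}"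
      using K a c unfolding simplicial_complex_def by blast
    moreover have "finite c" using K c unfolding simplicial_complex_def by auto
    ultimately show ?thesis using \<open>(\<Sum>s\<in>K. _) = _\<close> alt_sum[OF _ True] by simp
  next
    case False
    then have E: "{s\<in>K. a \<subseteq> s \<and> s \<subseteq> c} = {}" by auto
    have "a \<noteq> c" using False by auto
    then show ?thesis using \<open>(\<Sum>s\<in>K. _) = _\<close>[unfolded E] by simp
  qed
qed

lemma complex_down:
  assumes K: "simplicial_complex K" and c: "c \<in> K"
  shows "(\<Sum>a\<in>K. (if a \<subseteq> c then (-1::int) ^ card a else 0)) = -1"
proof -
  have fc: "finite c" and ne: "c \<noteq> {}" using K c unfolding simplicial_complex_def by auto
  have "(\<Sum>a\<in>K. (if a \<subseteq> c then (-1::int) ^ card a else 0))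
      = (\<Sum>a\<in>{a\<in>K. a \<subseteq> c}. (-1::int) ^ card a)"
    using K unfolding simplicial_complex_def by (simp add: sum.inter_filter)
  also have "{a\<in>K. a \<subseteq> c} = {s. {} \<subseteq> s \<and> s \<subseteq> c} - {{}}"
    using K c unfolding simplicial_complex_def by blast
  also have "(\<Sum>a\<in>{s. {} \<subseteq> s \<and> s \<subseteq> c} - {{}}. (-1::int) ^ card a) = 0 - 1"
    apply (subst sum_diff1)
    using fc ne alt_sum[OF fc, of "{}"] by auto
  finally show ?thesis by simp
qed

lemma chi_step:
  assumes "sh_step K L" shows "chi K = chi L"
proof -
  have col: "chi A = chi B" if "elementary_collapse A B" for A B :: "'b set set"
  proof -
    from that obtain \<sigma> \<tau> where A: "simplicial_complex A" and st: "\<sigma> \<in> A" "\<tau> \<in> A" "\<tau> \<subset> \<sigma>"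
      "card \<sigma> = card \<tau> + 1" and B: "B = A - {\<sigma>, \<tau>}"
      unfolding elementary_collapse_def by blast
    have fA: "finite A" using A unfolding simplicial_complex_def by auto
    have "chi B = chi A - (\<Sum>b\<in>{\<sigma>,\<tau>}. (-1::int) ^ card b)"
      unfolding chi_def B using st fA by (subst sum_diff) auto
    also have "(\<Sum>b\<in>{\<sigma>,\<tau>}. (-1::int) ^ card b) = 0" using st by auto
    finally show ?thesis by simp
  qed
  have iso: "chi A = chi B" if "simplicial_iso A B" for A B :: "'b set set"
  proof -
    from that obtain f where f: "inj_on f (\<Union>A)" and B: "B = (\<lambda>s. f ` s) ` A"
      unfolding simplicial_iso_def by blast
    have inj: "inj_on (\<lambda>s. f ` s) A"
      unfolding inj_on_def using f inj_on_image_eq_iff[OF f] by (metis Sup_upper)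
    have "chi B = (\<Sum>s\<in>A. (-1::int) ^ card (f ` s))"
      unfolding chi_def B by (rule sum.reindex[OF inj, unfolded comp_def])
    also have "\<dots> = chi A" unfolding chi_def
      apply (rule sum.cong[OF refl])
      using f by (metis Sup_upper card_image inj_on_subset)
    finally show ?thesis by simp
  qed
  show ?thesis using assms unfolding sh_step_def using col iso by metis
qed

lemma chi_sh:
  assumes "same_simple_homotopy_type K L" shows "chi K = chi L"
  using assms unfolding same_simple_homotopy_type_def
  by (induction rule: rtranclp_induct) (auto dest: chi_step)

lemma sylvester_det:
  fixes U V :: "'a::idom mat"
  assumes U: "U \<in> carrier_mat n m" and V: "V \<in> carrier_mat m n"
  shows "det (1\<^sub>m n - U * V) = det (1\<^sub>m m - V * U)"
proof -
  let ?M = "four_block_mat (1\<^sub>m m) V U (1\<^sub>m n)"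
  have UV: "U * V \<in> carrier_mat n n" and VU: "V * U \<in> carrier_mat m m" using U V by auto
  have e1: "?M = four_block_mat (1\<^sub>m m) (0\<^sub>m m n) U (1\<^sub>m n) *
      four_block_mat (1\<^sub>m m) V (0\<^sub>m n m) (1\<^sub>m n - U * V)"
    apply (subst mult_four_block_mat[OF one_carrier_mat zero_carrier_mat U one_carrier_mat one_carrier_mat V zero_carrier_mat])
    using U V UV by auto
  have e2: "?M = four_block_mat (1\<^sub>m m - V * U) V (0\<^sub>m n m) (1\<^sub>m n) *
      four_block_mat (1\<^sub>m m) (0\<^sub>m m n) U (1\<^sub>m n)"
    apply (subst mult_four_block_mat[OF _ V zero_carrier_mat one_carrier_mat one_carrier_mat zero_carrier_mat U one_carrier_mat])
    using U V VU by auto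
  have c1: "1\<^sub>m n - U * V \<in> carrier_mat n n" and c2: "1\<^sub>m m - V * U \<in> carrier_mat m m"
    using UV VU by (auto intro!: minus_carrier_mat)
  have d1: "det ?M = det (1\<^sub>m n - U * V)"
    apply (subst e1)
    apply (subst det_mult[of _ "m+n"])
      apply (rule four_block_carrier_mat; use U in auto)
     apply (rule four_block_carrier_mat; use c1 in auto)
    apply (subst det_four_block_mat_upper_right_zero[OF one_carrier_mat refl U one_carrier_mat])
    apply (subst det_four_block_mat_lower_left_zero[OF one_carrier_mat V refl c1])
    by simp
  have d2: "det ?M = det (1\<^sub>m m - V * U)"
    apply (subst e2)
    apply (subst det_mult[of _ "m+n"])
      apply (rule four_block_carrier_mat; use c2 in auto)
     apply (rule four_block_carrier_mat; use U in auto)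
    apply (subst det_four_block_mat_upper_right_zero[OF one_carrier_mat refl U one_carrier_mat])
    apply (subst det_four_block_mat_lower_left_zero[OF c2 V refl one_carrier_mat])
    by simp
  show ?thesis using d1 d2 by simp
qed

lemma det_formula:
  assumes K: "simplicial_complex K" and x: "bij_betw x {..<n} K"
  shows "\<bar>det (poset_matrix (\<subseteq>) n x)\<bar> = \<bar>1 + chi K\<bar>"
proof -
  define Z :: "int mat" where "Z = mat n n (\<lambda>(i,j). if x i \<subseteq> x j then 1 else 0)"
  define W :: "int mat" where "W = mat n n (\<lambda>(i,j). if x i \<subseteq> x j then (-1) ^ card (x i) * (-1) ^ card (x j) else 0)"
  define U :: "int mat" where "U = mat n 1 (\<lambda>_. 1)"
  define V :: "int mat" where "V = mat 1 n (\<lambda>_. 1)"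
  have x': "bij_betw x {0..<n} K" using x by (simp add: lessThan_atLeast0)
  have reidx: "(\<Sum>j\<in>{0..<n}. g (x j)) = (\<Sum>s\<in>K. g s)" for g :: "'a set \<Rightarrow> int"
    by (rule sum.reindex_bij_betw[OF x'])
  have xK: "x i \<in> K" if "i < n" for i using x that bij_betwE by fastforce
  have xinj: "x i = x k \<longleftrightarrow> i = k" if "i < n" "k < n" for i k
    using x that unfolding bij_betw_def inj_on_def by auto
  have Zc: "Z \<in> carrier_mat n n" and Wc: "W \<in> carrier_mat n n" and Uc: "U \<in> carrier_mat n 1"
    and Vc: "V \<in> carrier_mat 1 n" unfolding Z_def W_def U_def V_def by auto
  have ZW: "Z * W = 1\<^sub>m n"
  proof (rule eq_matI)
    fix i k assume i: "i < dim_row (1\<^sub>m n)" and k: "k < dim_col (1\<^sub>m n)"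
    then have i: "i < n" and k: "k < n" by auto
    have "(Z * W) $$ (i, k) = (\<Sum>j\<in>{0..<n}. Z $$ (i,j) * W $$ (j,k))"
      using i k Zc Wc by (simp add: scalar_prod_def)
    also have "\<dots> = (\<Sum>j\<in>{0..<n}. (if x i \<subseteq> x j \<and> x j \<subseteq> x k then (-1::int) ^ card (x j) else 0) * (-1) ^ card (x k))"
      by (rule sum.cong[OF refl]) (use i k in \<open>auto simp: Z_def W_def\<close>)
    also have "\<dots> = (\<Sum>s\<in>K. (if x i \<subseteq> s \<and> s \<subseteq> x k then (-1::int) ^ card s else 0) * (-1) ^ card (x k))"
      by (rule reidx)
    also have "\<dots> = (\<Sum>s\<in>K. (if x i \<subseteq> s \<and> s \<subseteq> x k then (-1::int) ^ card s else 0)) * (-1) ^ card (x k)"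
      by (simp add: sum_distrib_right)
    also have "\<dots> = (if x i = x k then (-1) ^ card (x i) else 0) * (-1) ^ card (x k)"
      using complex_interval[OF K xK[OF i] xK[OF k]] by simp
    also have "\<dots> = 1\<^sub>m n $$ (i, k)"
      using i k xinj[OF i k] by (auto simp flip: power_add)
    finally show "(Z * W) $$ (i, k) = 1\<^sub>m n $$ (i, k)" .
  qed (use Zc Wc in auto)
  have detZ: "\<bar>det Z\<bar> = 1"
  proof -
    have "det Z * det W = 1" using det_mult[OF Zc Wc] ZW by simp
    then show ?thesis by (auto simp: zmult_eq_1_iff)
  qed
  have s: "(V * (W * U)) $$ (0,0) = - chi K"
  proof -
    have "(V * (W * U)) $$ (0,0) = (\<Sum>j\<in>{0..<n}. (\<Sum>i\<in>{0..<n}. W $$ (j,i)))"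
      using Vc Wc Uc by (simp add: scalar_prod_def U_def V_def)
    also have "\<dots> = (\<Sum>j\<in>{0..<n}. (\<Sum>i\<in>{0..<n}. (if x j \<subseteq> x i then (-1) ^ card (x i) else 0) * (-1::int) ^ card (x j)))"
      by (rule sum.cong[OF refl], rule sum.cong[OF refl]) (auto simp: W_def)
    also have "\<dots> = (\<Sum>j\<in>{0..<n}. (\<Sum>s\<in>K. (if x j \<subseteq> s then (-1) ^ card s else 0) * (-1::int) ^ card (x j)))"
      by (rule sum.cong[OF refl], rule reidx)
    also have "\<dots> = (\<Sum>a\<in>K. (\<Sum>s\<in>K. (if a \<subseteq> s then (-1) ^ card s else 0) * (-1::int) ^ card a))"
      by (rule reidx)
    also have "\<dots> = (\<Sum>s\<in>K. (\<Sum>a\<in>K. (if a \<subseteq> s then (-1) ^ card a else 0) * (-1::int) ^ card s))"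
      by (subst sum.swap) (rule sum.cong[OF refl], rule sum.cong[OF refl], simp)
    also have "\<dots> = (\<Sum>s\<in>K. (\<Sum>a\<in>K. (if a \<subseteq> s then (-1) ^ card a else 0)) * (-1::int) ^ card s)"
      by (simp add: sum_distrib_right)
    also have "\<dots> = (\<Sum>s\<in>K. - ((-1::int) ^ card s))"
      by (rule sum.cong[OF refl]) (simp add: complex_down[OF K])
    finally show ?thesis unfolding chi_def by (simp add: sum_negf)
  qed
  have X: "poset_matrix (\<subseteq>) n x = (-1) \<cdot>\<^sub>m (Z - U * V)"
    by (rule eq_matI) (auto simp: poset_matrix_def Z_def U_def V_def scalar_prod_def)
  have WUc: "W * U \<in> carrier_mat n 1" using Wc Uc by auto
  have Zf: "Z - U * V = Z * (1\<^sub>m n - (W * U) * V)"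
  proof -
    have "Z * (1\<^sub>m n - (W * U) * V) = Z * 1\<^sub>m n - Z * ((W * U) * V)"
      using Zc WUc Vc by (subst mult_minus_distrib_mat[of _ n n]) auto
    also have "Z * ((W * U) * V) = U * V"
    proof -
      have "(W * U) * V = W * (U * V)" using Wc Uc Vc by (rule assoc_mult_mat)
      moreover have "Z * (W * (U * V)) = (Z * W) * (U * V)"
        using Zc Wc Uc Vc by (subst assoc_mult_mat[OF Zc Wc, of "U * V" n]) auto
      moreover have "(Z * W) * (U * V) = U * V" unfolding ZW using Uc Vc by auto
      ultimately show ?thesis by simp
    qed
    finally show ?thesis using Zc by simp
  qed
  have "det (Z - U * V) = det Z * det (1\<^sub>m 1 - V * (W * U))"
    unfolding Zf using Zc WUc Vc
    by (subst det_mult[of _ n]) (auto intro!: minus_carrier_mat simp: sylvester_det[OF WUc Vc])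
  also have "det (1\<^sub>m 1 - V * (W * U)) = 1 + chi K"
    using Vc WUc s by (subst det_single) (auto intro!: minus_carrier_mat)
  finally have "det (Z - U * V) = det Z * (1 + chi K)" .
  moreover have "det (poset_matrix (\<subseteq>) n x) = (-1) ^ n * det (Z - U * V)"
    unfolding X using Zc Uc Vc by simp
  ultimately show ?thesis using detZ by (simp add: abs_mult)
qed

lemma complex_det_chi:
  assumes K: "simplicial_complex K"
  shows "complex_det K = \<bar>1 + chi K\<bar>"
proof -
  have "finite K" using K unfolding simplicial_complex_def by auto
  then have "\<exists>x. bij_betw x {..<card K} K"
    using ex_bij_betw_nat_finite by (metis lessThan_atLeast0)
  then have "bij_betw (SOME x. bij_betw x {..<card K} K) {..<card K} K" by (rule someI_ex)
  then show ?thesis unfolding complex_det_def by (rule det_formula[OF K])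
qed

theorem mainTheorem7:
  fixes K L :: "nat set set"
  assumes "simplicial_complex K" and "simplicial_complex L"
    and "same_simple_homotopy_type K L"
  shows "complex_det K = complex_det L"
  using complex_det_chi[OF assms(1)] complex_det_chi[OF assms(2)] chi_sh[OF assms(3)] by simp

end
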